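(* Let $a<b$ be real numbers and $(R_n)_{n\ge0}$ a sequence of real polynomials such that: (a) $R_0$ is a constant and $R_1$ has degree $1$; (b) there exist $\alpha,\beta\in\mathbb{R}$, $\alpha\ne0$, with $R_n=(\alpha X+\beta)R_{n-1}-R_{n-2}$ for all $n\ge2$; (c) either (i) $R_n(a)R_{n+1}(a)>0$ and $R_n(b)R_{n+1}(b)<0$ for all $n\ge0$, or (ii) $R_n(a)R_{n+1}(a)<0$ and $R_n(b)R_{n+1}(b)>0$ for all $n\ge0$. Then: (1) $\deg R_n=n$; (2) all roots of $R_n$ are real, simple and lie in $(a,b)$: $a<x^{(n)}_1<\cdots<x^{(n)}_n<b$; (3) the roots of $R_{n+1}$ interlace those of $R_n$: $a<x^{(n+1)}_1<x^{(n)}_1<x^{(n+1)}_2<\cdots<x^{(n)}_n<x^{(n+1)}_{n+1}<b$. *)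

theory Defs
  imports "HOL-Computational_Algebra.Polynomial"
begin

end

theory Submission
  imports Defs
begin

lemma prod_lin_dvd:
  fixes p :: "real poly"
  assumes "finite S" "\<forall>s\<in>S. poly p s = 0"
  shows "(\<Prod>s\<in>S. [:-s,1:]) dvd p"
  using assms
proof (induction S arbitrary: p rule: finite_induct)
  case empty then show ?case by simp
next
  case (insert s S)
  have "(\<Prod>s\<in>S. [:-s,1:]) dvd p" using insert.IH insert.prems by auto
  then obtain q where q: "p = (\<Prod>s\<in>S. [:-s,1:]) * q" by (rule dvdE)
  have "poly (\<Prod>s\<in>S. [:-s,1:]) s \<noteq> 0"
    using insert(1,2) by (auto simp: poly_prod prod_zero_iff)
  moreover have "poly p s = 0" using insert by auto
  ultimately have "poly q s = 0" using q by simp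
  then have "[:-s,1:] dvd q" by (simp add: poly_eq_0_iff_dvd)
  then have "[:-s,1:] * (\<Prod>s\<in>S. [:-s,1:]) dvd p" unfolding q by (metis mult_dvd_mono dvd_refl mult.commute)
  then show ?case using insert(1,2) by (simp add: prod.insert)
qed

lemma degree_prod_lin:
  "finite S \<Longrightarrow> degree (\<Prod>s\<in>S. [:-(s::real),1:]) = card S"
  by (subst degree_prod_sum_eq) auto

lemma monic_prod_lin: "lead_coeff (\<Prod>s\<in>S. [:-(s::real),1:]) = 1"
  by (simp add: lead_coeff_prod)

lemma factor_set:
  fixes p :: "real poly"
  assumes "finite S" "\<forall>s\<in>S. poly p s = 0" "degree p = card S"
  shows "p = smult (lead_coeff p) (\<Prod>s\<in>S. [:-s,1:])"
proof -
  let ?P = "\<Prod>s\<in>S. [:-s,1:]"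
  obtain q where q: "p = ?P * q" using prod_lin_dvd[OF assms(1,2)] by (rule dvdE)
  show ?thesis
  proof (cases "q = 0")
    case True then show ?thesis using q by simp
  next
    case False
    have "?P \<noteq> 0" by (metis monic_prod_lin one_neq_zero leading_coeff_0_iff)
    then have "degree p = card S + degree q" using q False assms(1)
      by (simp add: degree_mult_eq degree_prod_lin)
    then have "degree q = 0" using assms(3) by simp
    then obtain k where k: "q = [:k:]" by (metis degree_eq_zeroE)
    have "lead_coeff p = k" using q k by (simp add: lead_coeff_mult monic_prod_lin)
    have "p = smult k ?P" using q k by simp
    then show ?thesis unfolding \<open>lead_coeff p = k\<close> .
  qed
qed

lemma factor_idx:
  fixes p :: "real poly"
  assumes "strict_mono_on {1..m} h" "\<forall>i\<in>{1..m}. poly p (h i) = 0" "degree p = m"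
  shows "p = smult (lead_coeff p) (\<Prod>i=1..m. [:-h i,1:])"
proof -
  have inj: "inj_on h {1..m}" using assms(1) by (rule strict_mono_on_imp_inj_on)
  have "p = smult (lead_coeff p) (\<Prod>s\<in>h`{1..m}. [:-s,1:])"
    using assms inj by (intro factor_set) (auto simp: card_image)
  also have "(\<Prod>s\<in>h`{1..m}. [:-s,1:]) = (\<Prod>i=1..m. [:-h i,1:])"
    using inj by (simp add: prod.reindex)
  finally show ?thesis .
qed

lemma strict_mono_on_consec:
  fixes h :: "nat \<Rightarrow> real"
  assumes "\<forall>i. 1 \<le> i \<and> i < m \<longrightarrow> h i < h (Suc i)"
  shows "strict_mono_on {1..m} h"
proof (rule strict_mono_onI)
  fix r s assume rs: "r \<in> {1..m}" "s \<in> {1..m}" "r < s"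
  have "\<forall>d. r + Suc d \<le> m \<longrightarrow> h r < h (r + Suc d)"
  proof
    fix d show "r + Suc d \<le> m \<longrightarrow> h r < h (r + Suc d)"
    proof (induction d)
      case 0 then show ?case using assms rs by auto
    next
      case (Suc d)
      then show ?case using assms[rule_format, of "r + Suc d"] rs by auto
    qed
  qed
  from this[rule_format, of "s - r - 1"] rs show "h r < h s" by auto
qed


definition rootsys :: "real \<Rightarrow> real \<Rightarrow> real poly \<Rightarrow> nat \<Rightarrow> (nat \<Rightarrow> real) \<Rightarrow> bool" where
  "rootsys a b p n f \<longleftrightarrow> strict_mono_on {1..n} f \<and> (\<forall>i\<in>{1..n}. a < f i \<and> f i < b) \<and> p \<noteq> 0
     \<and> p = smult (lead_coeff p) (\<Prod>i=1..n. [:-f i,1:])"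

definition interlace :: "(nat \<Rightarrow> real) \<Rightarrow> (nat \<Rightarrow> real) \<Rightarrow> nat \<Rightarrow> bool" where
  "interlace f g n \<longleftrightarrow> (\<forall>i\<in>{1..n}. g i < f i \<and> f i < g (Suc i))"

lemma rootsys_poly:
  assumes "rootsys a b p n f"
  shows "poly p t = lead_coeff p * (\<Prod>j=1..n. t - f j)"
proof -
  have "p = smult (lead_coeff p) (\<Prod>i=1..n. [:-f i,1:])" using assms by (simp add: rootsys_def)
  then have "poly p t = poly (smult (lead_coeff p) (\<Prod>i=1..n. [:-f i,1:])) t" by simp
  then show ?thesis by (simp add: poly_prod)
qed

lemma rootsys_degree:
  assumes "rootsys a b p n f"
  shows "degree p = n"
proof -
  have p: "p = smult (lead_coeff p) (\<Prod>i=1..n. [:-f i,1:])" "p \<noteq> 0" using assms by (auto simp: rootsys_def)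
  have "degree (\<Prod>i=1..n. [:-f i,1:]) = n" by (subst degree_prod_sum_eq) auto
  then show ?thesis using p by (metis degree_smult_eq leading_coeff_0_iff)
qed

lemma prod_neg_one:
  fixes t :: "nat \<Rightarrow> real"
  assumes "finite A" "k \<in> A" "t k < 0" "\<forall>j\<in>A - {k}. t j > 0"
  shows "(\<Prod>j\<in>A. t j) < 0"
proof -
  have "(\<Prod>j\<in>A. t j) = t k * (\<Prod>j\<in>A - {k}. t j)" using assms by (simp add: prod.remove)
  moreover have "(\<Prod>j\<in>A - {k}. t j) > 0" using assms by (intro prod_pos) auto
  ultimately show ?thesis using assms(3) by (simp add: mult_neg_pos)
qed

lemma sgn_trans: "(x::real) * y > 0 \<Longrightarrow> y * z > 0 \<Longrightarrow> x * z > 0"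
  by (auto simp: zero_less_mult_iff)

lemma step:
  assumes ab: "a < b" and al: "\<alpha> \<noteq> 0"
    and rf: "rootsys a b r n f" and qg: "rootsys a b q (Suc n) g" and il: "interlace f g n"
    and pdef: "p = [:\<beta>, \<alpha>:] * q - r"
    and sa: "poly r a * poly p a > 0" and sb: "poly r b * poly p b > 0"
  shows "\<exists>h. rootsys a b p (n+2) h \<and> interlace g h (Suc n)"
proof -
  define c where "c = lead_coeff r"
  have c0: "c \<noteq> 0" using rf by (simp add: rootsys_def c_def)
  have rp: "\<And>t. poly r t = c * (\<Prod>j=1..n. t - f j)" using rootsys_poly[OF rf] c_def by simp
  have gmono: "strict_mono_on {1..Suc n} g" and gab: "\<forall>i\<in>{1..Suc n}. a < g i \<and> g i < b"
    using qg by (auto simp: rootsys_def)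
  have gle: "\<And>i j. 1 \<le> i \<Longrightarrow> i < j \<Longrightarrow> j \<le> Suc n \<Longrightarrow> g i < g j"
    using gmono by (auto simp: strict_mono_on_def)
  have qroot: "\<And>i. i \<in> {1..Suc n} \<Longrightarrow> poly q (g i) = 0"
  proof -
    fix i assume i: "i \<in> {1..Suc n}"
    have "(\<Prod>j=1..Suc n. g i - g j) = 0" using i by (intro prod_zero) auto
    then show "poly q (g i) = 0" by (simp only: rootsys_poly[OF qg] mult_zero_right)
  qed
  have pg: "\<And>i. i \<in> {1..Suc n} \<Longrightarrow> poly p (g i) = - poly r (g i)"
    using qroot pdef by simp
  have ilf: "\<And>i. i \<in> {1..n} \<Longrightarrow> g i < f i \<and> f i < g (Suc i)" using il by (auto simp: interlace_def)
  have mid: "\<forall>i\<in>{1..n}. \<exists>t. g i < t \<and> t < g (Suc i) \<and> poly p t = 0"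
  proof
    fix i assume i: "i \<in> {1..n}"
    have "(\<Prod>j=1..n. (g i - f j) * (g (Suc i) - f j)) < 0"
    proof (rule prod_neg_one[OF _ i])
      show "(g i - f i) * (g (Suc i) - f i) < 0" using ilf[OF i] by (simp add: mult_neg_pos)
      show "\<forall>j\<in>{1..n} - {i}. 0 < (g i - f j) * (g (Suc i) - f j)"
      proof
        fix j assume j: "j \<in> {1..n} - {i}"
        show "0 < (g i - f j) * (g (Suc i) - f j)"
        proof (cases "j < i")
          case True
          have "f j < g (Suc j)" using ilf j by auto
          also have "g (Suc j) \<le> g i" using gle[of "Suc j" i] True i by (cases "Suc j = i") auto
          finally have "f j < g i" .
          moreover have "g i < g (Suc i)" using gle[of i "Suc i"] i by auto
          ultimately show ?thesis by simp
        next
          case False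
          then have ji: "i < j" using j by auto
          have "g j < f j" using ilf j by auto
          moreover have "g (Suc i) \<le> g j" using gle[of "Suc i" j] ji j by (cases "Suc i = j") auto
          moreover have "g i < g (Suc i)" using gle[of i "Suc i"] i by auto
          ultimately show ?thesis by (simp add: mult_neg_neg)
        qed
      qed
    qed simp
    then have "poly r (g i) * poly r (g (Suc i)) < 0"
      unfolding rp by (simp add: prod.distrib mult_ac) (metis mult.assoc mult_pos_neg c0 zero_less_power2 power2_eq_square mult.commute)
    then have "poly p (g i) * poly p (g (Suc i)) < 0" using pg i by simp
    moreover have "g i < g (Suc i)" using gle[of i "Suc i"] i by auto
    ultimately show "\<exists>t. g i < t \<and> t < g (Suc i) \<and> poly p t = 0" using poly_IVT by blast
  qed
  have g1: "g 1 < f j" if j: "j \<in> {1..n}" for j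
  proof -
    have "g 1 \<le> g j" using gle[of 1 j] j by (cases "j = 1") auto
    then show ?thesis using ilf[OF j] by simp
  qed
  have gn: "f j < g (Suc n)" if j: "j \<in> {1..n}" for j
  proof -
    have "g (Suc j) \<le> g (Suc n)" using gle[of "Suc j" "Suc n"] j by (cases "j = n") auto
    then show ?thesis using ilf[OF j] by simp
  qed
  have fab: "\<And>j. j \<in> {1..n} \<Longrightarrow> a < f j \<and> f j < b" using rf by (auto simp: rootsys_def)
  have sq: "\<And>u v. poly r u * poly r v = c * c * (\<Prod>j=1..n. (u - f j) * (v - f j))"
    unfolding rp by (simp add: prod.distrib mult_ac)
  have cc: "c * c > 0" using c0 by (auto simp: zero_less_mult_iff)
  have "(\<Prod>j=1..n. (a - f j) * (g 1 - f j)) > 0"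
    using g1 fab by (intro prod_pos) (auto intro!: mult_neg_neg)
  then have "poly r a * poly r (g 1) > 0" unfolding sq using cc by simp
  moreover have "poly p a * poly r a > 0" using sa by (simp add: mult.commute)
  ultimately have "poly p a * poly r (g 1) > 0" using sgn_trans by blast
  then have "poly p a * poly p (g 1) < 0" using pg[of 1] by simp
  moreover have "a < g 1" using gab by auto
  ultimately obtain t0 where t0: "a < t0" "t0 < g 1" "poly p t0 = 0" using poly_IVT by blast
  have "(\<Prod>j=1..n. (b - f j) * (g (Suc n) - f j)) > 0"
    using gn fab by (intro prod_pos) auto
  then have "poly r b * poly r (g (Suc n)) > 0" unfolding sq using cc by simp
  moreover have "poly p b * poly r b > 0" using sb by (simp add: mult.commute)
  ultimately have "poly p b * poly r (g (Suc n)) > 0" using sgn_trans by blast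
  then have "poly p (g (Suc n)) * poly p b < 0" using pg[of "Suc n"] by (simp add: mult.commute)
  moreover have "g (Suc n) < b" using gab by auto
  ultimately obtain t1 where t1: "g (Suc n) < t1" "t1 < b" "poly p t1 = 0" using poly_IVT by blast
  from bchoice[OF mid] obtain m where m: "\<forall>i\<in>{1..n}. g i < m i \<and> m i < g (Suc i) \<and> poly p (m i) = 0" by blast
  define h where "h i = (if i = 1 then t0 else if i = n + 2 then t1 else m (i - 1))" for i
  have ilh: "interlace g h (Suc n)"
    unfolding interlace_def
  proof
    fix i assume i: "i \<in> {1..Suc n}"
    have A: "h i < g i"
    proof (cases "i = 1")
      case True then show ?thesis using t0 by (simp add: h_def)
    next
      case False
      then obtain k where k: "i = Suc k" "k \<in> {1..n}" using i by (cases i) auto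
      have "m k < g (Suc k)" using m k by blast
      moreover have "h (Suc k) = m k" using k unfolding h_def by auto
      ultimately show ?thesis using k by simp
    qed
    have B: "g i < h (Suc i)"
    proof (cases "i = Suc n")
      case True then show ?thesis using t1 by (simp add: h_def)
    next
      case False
      then have "i \<in> {1..n}" using i by auto
      then show ?thesis using m False i by (auto simp: h_def)
    qed
    show "h i < g i \<and> g i < h (Suc i)" using A B by simp
  qed
  have hmono: "strict_mono_on {1..n+2} h"
  proof (rule strict_mono_on_consec, intro allI impI)
    fix i assume "1 \<le> i \<and> i < n + 2"
    then have "i \<in> {1..Suc n}" by auto
    then have "h i < g i \<and> g i < h (Suc i)" using ilh unfolding interlace_def by blast
    then show "h i < h (Suc i)" by linarith
  qed
  have hroot: "\<forall>i\<in>{1..n+2}. poly p (h i) = 0"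
  proof
    fix i assume i: "i \<in> {1..n+2}"
    show "poly p (h i) = 0"
    proof (cases "i = 1 \<or> i = n + 2")
      case True then show ?thesis using t0 t1 by (auto simp: h_def)
    next
      case False
      then have "i - 1 \<in> {1..n}" using i by auto
      then show ?thesis using m False by (auto simp: h_def)
    qed
  qed
  have hab: "\<forall>i\<in>{1..n+2}. a < h i \<and> h i < b"
  proof
    fix i assume i: "i \<in> {1..n+2}"
    have "h 1 \<le> h i"
    proof (cases "i = 1")
      case False then show ?thesis using strict_mono_onD[OF hmono, of 1 i] i by auto
    qed simp
    moreover have "h i \<le> h (n+2)"
    proof (cases "i = n+2")
      case False then show ?thesis using strict_mono_onD[OF hmono, of i "n+2"] i by auto
    qed simp
    moreover have "h 1 = t0" "h (n+2) = t1" by (auto simp: h_def)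
    ultimately show "a < h i \<and> h i < b" using t0 t1 by auto
  qed
  have dq: "degree q = Suc n" by (rule rootsys_degree[OF qg])
  have dr: "degree r = n" by (rule rootsys_degree[OF rf])
  have q0: "q \<noteq> 0" using qg by (simp add: rootsys_def)
  have "degree ([:\<beta>, \<alpha>:] * q) = degree [:\<beta>, \<alpha>:] + degree q"
    by (rule degree_mult_eq) (use al q0 in auto)
  then have d1: "degree ([:\<beta>, \<alpha>:] * q) = n + 2" using al dq by simp
  have dp: "degree p = n + 2" unfolding pdef diff_conv_add_uminus
    using d1 dr by (subst degree_add_eq_left) auto
  have p0: "p \<noteq> 0" using dp by auto
  have "p = smult (lead_coeff p) (\<Prod>i=1..n+2. [:-h i,1:])"
    by (rule factor_idx[OF hmono hroot dp])
  then have "rootsys a b p (n+2) h" using hmono hab p0 by (simp add: rootsys_def)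
  then show ?thesis using ilh by blast
qed

lemma sgn_trans_neg: "(x::real) * y < 0 \<Longrightarrow> y * z < 0 \<Longrightarrow> x * z > 0"
  by (auto simp: mult_less_0_iff zero_less_mult_iff)

lemma sq_cancel: "((c::real) * x) * (c * y) < 0 \<Longrightarrow> x * y < 0"
proof -
  assume h: "(c * x) * (c * y) < 0"
  have eq: "(c * x) * (c * y) = (c * c) * (x * y)" by (simp add: mult_ac)
  show "x * y < 0"
  proof (rule ccontr)
    assume "\<not> x * y < 0"
    then have "(c * c) * (x * y) \<ge> 0" by (simp add: mult_nonneg_nonneg)
    then show False using h eq by simp
  qed
qed

fun pairs :: "(nat \<Rightarrow> (nat \<Rightarrow> real) \<Rightarrow> (nat \<Rightarrow> real)) \<Rightarrow> (nat \<Rightarrow> real) \<times> (nat \<Rightarrow> real) \<Rightarrow> nat \<Rightarrow> (nat \<Rightarrow> real) \<times> (nat \<Rightarrow> real)" where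
  "pairs S st 0 = st"
| "pairs S st (Suc n) = (snd (pairs S st n), S n (snd (pairs S st n)))"

theorem proposition5:
  fixes a b \<alpha> \<beta> :: real and R :: "nat \<Rightarrow> real poly"
  assumes "a < b"
    and "degree (R 0) = 0" and "degree (R 1) = 1"
    and "\<alpha> \<noteq> 0"
    and "\<forall>n\<ge>2. R n = [:\<beta>, \<alpha>:] * R (n - 1) - R (n - 2)"
    and "(\<forall>n. poly (R n) a * poly (R (n + 1)) a > 0 \<and> poly (R n) b * poly (R (n + 1)) b < 0)
       \<or> (\<forall>n. poly (R n) a * poly (R (n + 1)) a < 0 \<and> poly (R n) b * poly (R (n + 1)) b > 0)"
  shows "\<exists>x :: nat \<Rightarrow> nat \<Rightarrow> real.
           (\<forall>n. degree (R n) = n)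
         \<and> (\<forall>n. R n = smult (lead_coeff (R n)) (\<Prod>i = 1..n. [:- x n i, 1:]))
         \<and> (\<forall>n. strict_mono_on {1..n} (x n))
         \<and> (\<forall>n\<ge>1. a < x n 1 \<and> x n n < b)
         \<and> (\<forall>n. \<forall>i\<in>{1..n}. x (n + 1) i < x n i \<and> x n i < x (n + 1) (i + 1))"
proof -
  note ab = assms(1) and al = assms(4) and rec = assms(5)
  have sig: "\<forall>n. poly (R n) a * poly (R (n+2)) a > 0 \<and> poly (R n) b * poly (R (n+2)) b > 0"
  proof
    fix n
    from assms(6) show "poly (R n) a * poly (R (n+2)) a > 0 \<and> poly (R n) b * poly (R (n+2)) b > 0"
    proof
      assume h: "\<forall>n. poly (R n) a * poly (R (n + 1)) a > 0 \<and> poly (R n) b * poly (R (n + 1)) b < 0"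
      have "poly (R n) a * poly (R (n + 1)) a > 0" "poly (R (n+1)) a * poly (R (n + 2)) a > 0"
           "poly (R n) b * poly (R (n + 1)) b < 0" "poly (R (n+1)) b * poly (R (n + 2)) b < 0"
        using h[rule_format, of n] h[rule_format, of "n+1"] by (auto simp: numeral_2_eq_2)
      then show ?thesis using sgn_trans sgn_trans_neg by blast
    next
      assume h: "\<forall>n. poly (R n) a * poly (R (n + 1)) a < 0 \<and> poly (R n) b * poly (R (n + 1)) b > 0"
      have "poly (R n) a * poly (R (n + 1)) a < 0" "poly (R (n+1)) a * poly (R (n + 2)) a < 0"
           "poly (R n) b * poly (R (n + 1)) b > 0" "poly (R (n+1)) b * poly (R (n + 2)) b > 0"
        using h[rule_format, of n] h[rule_format, of "n+1"] by (auto simp: numeral_2_eq_2)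
      then show ?thesis using sgn_trans sgn_trans_neg by blast
    qed
  qed
  define c where "c = coeff (R 0) 0"
  have R0: "R 0 = [:c:]" using assms(2) unfolding c_def by (metis degree_eq_zeroE coeff_pCons_0)
  have pR0: "\<And>t. poly (R 0) t = c" using R0 by simp
  have "(c * poly (R 1) a) * (c * poly (R 1) b) < 0"
  proof -
    from assms(6) have "(c * poly (R 1) a > 0 \<and> c * poly (R 1) b < 0) \<or> (c * poly (R 1) a < 0 \<and> c * poly (R 1) b > 0)"
      using pR0 by (metis One_nat_def add_0)
    then show ?thesis by (auto simp: mult_pos_neg mult_neg_pos)
  qed
  then have R1ab: "poly (R 1) a * poly (R 1) b < 0" by (rule sq_cancel)
  have c0: "c \<noteq> 0" using \<open>(c * poly (R 1) a) * (c * poly (R 1) b) < 0\<close> by auto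
  obtain t where t: "a < t" "t < b" "poly (R 1) t = 0" using poly_IVT[OF ab R1ab] by blast
  define x0 :: "nat \<Rightarrow> real" where "x0 = (\<lambda>_. 0)"
  define x1 :: "nat \<Rightarrow> real" where "x1 = (\<lambda>_. t)"
  have rs0: "rootsys a b (R 0) 0 x0"
  proof -
    have "R 0 = smult (lead_coeff (R 0)) (\<Prod>i=1..0. [:-x0 i,1:])"
      by (rule factor_idx) (use assms(2) in \<open>auto simp: strict_mono_on_def\<close>)
    then show ?thesis using R0 c0 by (simp add: rootsys_def strict_mono_on_def)
  qed
  have rs1: "rootsys a b (R 1) 1 x1"
  proof -
    have "R 1 = smult (lead_coeff (R 1)) (\<Prod>i=1..1. [:-x1 i,1:])"
      by (rule factor_idx) (use assms(3) t in \<open>auto simp: strict_mono_on_def x1_def\<close>)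
    moreover have "R 1 \<noteq> 0" using assms(3) by auto
    ultimately show ?thesis using t by (simp add: rootsys_def strict_mono_on_def x1_def)
  qed
  define S where "S n g = (SOME h. rootsys a b (R (n+2)) (n+2) h \<and> interlace g h (Suc n))" for n g
  define P where "P = pairs S (x0, x1)"
  have inv: "rootsys a b (R n) n (fst (P n)) \<and> rootsys a b (R (Suc n)) (Suc n) (snd (P n))
             \<and> interlace (fst (P n)) (snd (P n)) n" for n
  proof (induction n)
    case 0 then show ?case using rs0 rs1 by (simp add: P_def interlace_def)
  next
    case (Suc n)
    then have h1: "rootsys a b (R n) n (fst (P n))" and h2: "rootsys a b (R (Suc n)) (Suc n) (snd (P n))"
      and h3: "interlace (fst (P n)) (snd (P n)) n" by auto
    have rr: "R (n+2) = [:\<beta>, \<alpha>:] * R (Suc n) - R n" using rec[rule_format, of "n+2"] by simp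
    have "\<exists>h. rootsys a b (R (n+2)) (n+2) h \<and> interlace (snd (P n)) h (Suc n)"
      by (rule step[OF ab al h1 h2 h3 rr]) (use sig in auto)
    then have "rootsys a b (R (n+2)) (n+2) (S n (snd (P n))) \<and> interlace (snd (P n)) (S n (snd (P n))) (Suc n)"
      unfolding S_def by (rule someI_ex)
    moreover have "P (Suc n) = (snd (P n), S n (snd (P n)))" by (simp add: P_def)
    ultimately show ?case using h2 by simp
  qed
  define x where "x n = fst (P n)" for n
  have xs: "x (n + 1) = snd (P n)" for n by (simp add: x_def P_def)
  show ?thesis
  proof (intro exI[of _ x] conjI allI impI ballI)
    fix n
    show "degree (R n) = n" using inv[of n] rootsys_degree by blast
    show "R n = smult (lead_coeff (R n)) (\<Prod>i = 1..n. [:- x n i, 1:])"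
      using inv[of n] by (simp add: rootsys_def x_def)
    show "strict_mono_on {1..n} (x n)" using inv[of n] by (simp add: rootsys_def x_def)
  next
    fix n :: nat assume n: "1 \<le> n"
    have "\<forall>i\<in>{1..n}. a < x n i \<and> x n i < b" using inv[of n] by (simp add: rootsys_def x_def)
    then show "a < x n 1" "x n n < b" using n by auto
  next
    fix n :: nat and i assume i: "i \<in> {1..n}"
    have "interlace (x n) (x (n+1)) n" using inv[of n] xs[of n] by (simp add: x_def)
    then show "x (n + 1) i < x n i" "x n i < x (n + 1) (i + 1)" using i by (auto simp: interlace_def)
  qed
qed

end
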